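(* Let $H_\omega = -\Delta + V_\omega$ be the Anderson Hamiltonian on $\ell^2(\mathbb{Z}^d)$ and let $I$ be an interval of exponential localization for $H_\omega$. Then, with probability one, every eigenvalue of $H_\omega$ in $I$ is simple.
   Context: The Anderson Hamiltonian is the random operator $H_\omega = -\Delta + V_\omega$ on $\ell^2(\mathbb{Z}^d)$, where $\Delta(x,y)=1$ if $|x-y|=1$ and $\Delta(x,y)=0$ otherwise, and the random potential $V_\omega = \{V_\omega(x), x\in\mathbb{Z}^d\}$ (acting by multiplication) consists of independent identically distributed random variables whose common probability distribution $\mu$ has a bounded density $\rho$. An interval $I$ is an interval of exponential localization for $H_\omega$ if, with probability one, $H_\omega$ has pure point spectrum in $I$ and every eigenfunction of $H_\omega$ with eigenvalue in $I$ decays exponentially (i.e. $|\varphi(x)|\le C_\varphi e^{-m|x|}$ for some $C_\varphi<\infty$, $m>0$). *)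

theory Defs
  imports "HOL-Probability.Probability"
begin

text \<open>Lattice sites of Z^d: functions from a finite index type 'd (with CARD('d) = d) to int.\<close>
type_synonym 'd site = "'d \<Rightarrow> int"

definition site_norm :: "('d::finite) site \<Rightarrow> real" where
  "site_norm x = (\<Sum>i\<in>UNIV. real_of_int \<bar>x i\<bar>)"

definition adjacent :: "('d::finite) site \<Rightarrow> 'd site \<Rightarrow> bool" where
  "adjacent x y \<longleftrightarrow> site_norm (\<lambda>i. x i - y i) = 1"

definition in_l2 :: "('d site \<Rightarrow> complex) \<Rightarrow> bool" where
  "in_l2 \<phi> \<longleftrightarrow> (\<lambda>x. (cmod (\<phi> x))^2) summable_on UNIV"

definition l2_inner :: "('d site \<Rightarrow> complex) \<Rightarrow> ('d site \<Rightarrow> complex) \<Rightarrow> complex" where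
  "l2_inner \<phi> \<psi> = infsum (\<lambda>x. cnj (\<phi> x) * \<psi> x) UNIV"

text \<open>The Anderson Hamiltonian H = -Delta + V acting on functions on Z^d.
  As an operator on l^2 it is taken with its maximal (= self-adjoint) domain
  {phi in l^2. H phi in l^2}.\<close>
definition anderson_op :: "('d::finite site \<Rightarrow> real) \<Rightarrow> ('d site \<Rightarrow> complex) \<Rightarrow> ('d site \<Rightarrow> complex)" where
  "anderson_op V \<phi> = (\<lambda>x. - (\<Sum>y\<in>{y. adjacent x y}. \<phi> y) + complex_of_real (V x) * \<phi> x)"

definition is_eigenfunction :: "('d::finite site \<Rightarrow> real) \<Rightarrow> real \<Rightarrow> ('d site \<Rightarrow> complex) \<Rightarrow> bool" where
  "is_eigenfunction V E \<phi> \<longleftrightarrow>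
     in_l2 \<phi> \<and> \<phi> \<noteq> (\<lambda>_. 0) \<and> anderson_op V \<phi> = (\<lambda>x. complex_of_real E * \<phi> x)"

definition eigenvalue :: "('d::finite site \<Rightarrow> real) \<Rightarrow> real \<Rightarrow> bool" where
  "eigenvalue V E \<longleftrightarrow> (\<exists>\<phi>. is_eigenfunction V E \<phi>)"

definition simple_eigenvalue :: "('d::finite site \<Rightarrow> real) \<Rightarrow> real \<Rightarrow> bool" where
  "simple_eigenvalue V E \<longleftrightarrow> eigenvalue V E \<and>
     (\<forall>\<phi> \<psi>. is_eigenfunction V E \<phi> \<longrightarrow> is_eigenfunction V E \<psi> \<longrightarrow>
        (\<exists>c::complex. \<psi> = (\<lambda>x. c * \<phi> x)))"

definition resolvent :: "('d::finite site \<Rightarrow> real) \<Rightarrow> complex \<Rightarrow> ('d site \<Rightarrow> complex) \<Rightarrow> ('d site \<Rightarrow> complex)" where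
  "resolvent V z \<phi> = (THE \<psi>. in_l2 \<psi> \<and> (\<forall>x. anderson_op V \<psi> x - z * \<psi> x = \<phi> x))"

definition spectral_measure :: "('d::finite site \<Rightarrow> real) \<Rightarrow> ('d site \<Rightarrow> complex) \<Rightarrow> real measure \<Rightarrow> bool" where
  "spectral_measure V \<phi> \<mu> \<longleftrightarrow> sets \<mu> = sets borel \<and> finite_measure \<mu> \<and>
     (\<forall>z. Im z \<noteq> 0 \<longrightarrow>
        integrable \<mu> (\<lambda>t. 1 / (complex_of_real t - z)) \<and>
        (\<integral>t. 1 / (complex_of_real t - z) \<partial>\<mu>) = l2_inner \<phi> (resolvent V z \<phi>))"

text \<open>H has pure point spectrum in I: every spectral measure, restricted to I, is pure point.\<close>
definition pure_point_spectrum_in :: "('d::finite site \<Rightarrow> real) \<Rightarrow> real set \<Rightarrow> bool" where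
  "pure_point_spectrum_in V I \<longleftrightarrow>
     (\<forall>\<phi> \<mu>. in_l2 \<phi> \<longrightarrow> spectral_measure V \<phi> \<mu> \<longrightarrow>
        (\<exists>S. countable S \<and> emeasure \<mu> (I - S) = 0))"

definition exp_decaying :: "('d::finite site \<Rightarrow> complex) \<Rightarrow> bool" where
  "exp_decaying \<phi> \<longleftrightarrow> (\<exists>C m. m > (0::real) \<and>
      (\<forall>x. cmod (\<phi> x) \<le> C * exp (- m * site_norm x)))"

definition anderson_model :: "'a measure \<Rightarrow> ('a \<Rightarrow> ('d::finite) site \<Rightarrow> real) \<Rightarrow> (real \<Rightarrow> real) \<Rightarrow> bool" where
  "anderson_model M V \<rho> \<longleftrightarrow> prob_space M \<and>
     (\<forall>t. 0 \<le> \<rho> t) \<and> (\<exists>B. \<forall>t. \<rho> t \<le> B) \<and>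
     (\<forall>x. distributed M lborel (\<lambda>\<omega>. V \<omega> x) (\<lambda>t. ennreal (\<rho> t))) \<and>
     prob_space.indep_vars M (\<lambda>_. borel) (\<lambda>x \<omega>. V \<omega> x) UNIV"

definition exp_localization_interval :: "'a measure \<Rightarrow> ('a \<Rightarrow> ('d::finite) site \<Rightarrow> real) \<Rightarrow> real set \<Rightarrow> bool" where
  "exp_localization_interval M V I \<longleftrightarrow> is_interval I \<and>
     (AE \<omega> in M. pure_point_spectrum_in (V \<omega>) I \<and>
        (\<forall>E\<in>I. \<forall>\<phi>. is_eigenfunction (V \<omega>) E \<phi> \<longrightarrow> exp_decaying \<phi>))"

end

theory Submission
  imports Defs
begin

definition sh :: "('d::finite) site \<Rightarrow> 'd site \<Rightarrow> 'd site" where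
  "sh z u = (\<lambda>i. z i + u i)"

definition U1 :: "('d::finite) site set" where "U1 = {u. site_norm u = 1}"

definition lap :: "(('d::finite) site \<Rightarrow> complex) \<Rightarrow> 'd site \<Rightarrow> complex" where
  "lap f z = (\<Sum>y\<in>{y. adjacent z y}. f y)"

lemma anderson_op_lap: "anderson_op V f z = - lap f z + complex_of_real (V z) * f z"
  by (simp add: anderson_op_def lap_def)

lemma finite_U1: "finite (U1 :: ('d::finite) site set)"
proof -
  have "U1 \<subseteq> (Pi\<^sub>E (UNIV::'d set) (\<lambda>_. {-1..1::int}))"
  proof
    fix u :: "'d site" assume "u \<in> U1"
    hence s: "site_norm u = 1" by (simp add: U1_def)
    have "\<bar>u i\<bar> \<le> 1" for i
    proof -
      have "real_of_int \<bar>u i\<bar> \<le> (\<Sum>j\<in>UNIV. real_of_int \<bar>u j\<bar>)"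
        by (rule member_le_sum) auto
      thus ?thesis using s by (simp add: site_norm_def)
    qed
    thus "u \<in> Pi\<^sub>E UNIV (\<lambda>_. {-1..1::int})" by (auto simp: abs_le_iff)
  qed
  moreover have "finite (Pi\<^sub>E (UNIV::'d set) (\<lambda>_. {-1..1::int}))"
    by (rule finite_PiE) auto
  ultimately show ?thesis by (rule finite_subset)
qed

lemma site_norm_neg: "site_norm (\<lambda>i. - u i) = site_norm u"
  by (simp add: site_norm_def)

lemma adjacent_sh: "{y. adjacent z y} = sh z ` U1"
proof (rule set_eqI, rule iffI)
  fix y assume "y \<in> {y. adjacent z y}"
  hence "site_norm (\<lambda>i. z i - y i) = 1" by (simp add: adjacent_def)
  hence "site_norm (\<lambda>i. y i - z i) = 1" using site_norm_neg[of "\<lambda>i. z i - y i"] by simp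
  moreover have "y = sh z (\<lambda>i. y i - z i)" by (simp add: sh_def)
  ultimately show "y \<in> sh z ` U1" by (auto simp: U1_def)
next
  fix y assume "y \<in> sh z ` U1"
  then obtain u where u: "site_norm u = 1" "y = sh z u" by (auto simp: U1_def)
  have "(\<lambda>i. z i - y i) = (\<lambda>i. - u i)" using u(2) by (auto simp: sh_def)
  thus "y \<in> {y. adjacent z y}" using u(1) site_norm_neg[of u] by (simp add: adjacent_def)
qed

lemma inj_sh: "inj (sh z)"
  by (auto simp: inj_def sh_def fun_eq_iff)

lemma lap_U1: "lap f z = (\<Sum>u\<in>U1. f (sh z u))"
  unfolding lap_def adjacent_sh by (subst sum.reindex) (auto intro: inj_on_subset[OF inj_sh])

lemma bij_sh: "bij (\<lambda>z. sh z u)"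
  by (rule bij_betwI[where g="\<lambda>z. sh z (\<lambda>i. - u i)"]) (auto simp: sh_def)

lemma bij_neg_U1: "bij_betw (\<lambda>u i. - u i) U1 U1"
  by (rule bij_betwI[where g="\<lambda>u i. - u i"]) (auto simp: U1_def site_norm_neg)

lemma in_l2_shift:
  assumes "in_l2 f" shows "in_l2 (\<lambda>z. f (sh z u))"
  using assms unfolding in_l2_def
  using summable_on_reindex_bij_betw[OF bij_sh[of u], of "\<lambda>z. (cmod (f z))\<^sup>2"] by simp

lemma l2_prod_summable:
  assumes "in_l2 f" "in_l2 g" shows "(\<lambda>z. cnj (f z) * g z) summable_on UNIV"
proof -
  have "(\<lambda>z. (cmod (f z))\<^sup>2 + (cmod (g z))\<^sup>2) summable_on UNIV"
    using assms unfolding in_l2_def by (rule summable_on_add)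
  hence "(\<lambda>z. norm (cnj (f z) * g z)) summable_on UNIV"
  proof (rule summable_on_comparison_test)
    fix z
    have "cmod (f z) * cmod (g z) \<le> (cmod (f z))\<^sup>2 + (cmod (g z))\<^sup>2"
      by (smt (verit) norm_ge_zero power2_eq_square mult_mono mult_nonneg_nonneg)
    thus "norm (cnj (f z) * g z) \<le> (cmod (f z))\<^sup>2 + (cmod (g z))\<^sup>2" by (simp add: norm_mult)
  qed simp
  thus ?thesis by (simp add: summable_on_iff_abs_summable_on_complex)
qed

lemma has_sum_sum_fun:
  fixes f :: "'i \<Rightarrow> 'a \<Rightarrow> 'b::topological_comm_monoid_add"
  assumes "finite I" "\<And>i. i \<in> I \<Longrightarrow> (f i has_sum s i) A"
  shows "((\<lambda>x. \<Sum>i\<in>I. f i x) has_sum (\<Sum>i\<in>I. s i)) A"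
  using assms
proof (induction I rule: finite_induct)
  case empty thus ?case by simp
next
  case (insert a I)
  have "((\<lambda>x. f a x + (\<Sum>i\<in>I. f i x)) has_sum (s a + (\<Sum>i\<in>I. s i))) A"
    using insert.prems insert.IH by (intro has_sum_add) auto
  thus ?case using insert by simp
qed

lemma lap_sym:
  assumes f: "in_l2 f" and g: "in_l2 g"
  defines "S \<equiv> (\<Sum>u\<in>U1. infsum (\<lambda>z. cnj (f z) * g (sh z u)) UNIV)"
  shows "((\<lambda>z. cnj (f z) * lap g z) has_sum S) UNIV"
    and "((\<lambda>z. cnj (lap f z) * g z) has_sum S) UNIV"
proof -
  have "((\<lambda>z. \<Sum>u\<in>U1. cnj (f z) * g (sh z u)) has_sum S) UNIV"
    unfolding S_def
    by (intro has_sum_sum_fun finite_U1 has_sum_infsum l2_prod_summable f in_l2_shift g)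
  thus "((\<lambda>z. cnj (f z) * lap g z) has_sum S) UNIV"
    by (simp add: lap_U1 sum_distrib_left)
  have eq: "infsum (\<lambda>z. cnj (f (sh z u)) * g z) UNIV =
            infsum (\<lambda>z. cnj (f z) * g (sh z (\<lambda>i. - u i))) UNIV" for u
  proof -
    have "infsum (\<lambda>z. cnj (f (sh z u)) * g z) UNIV =
          infsum (\<lambda>w. cnj (f (sh (sh w (\<lambda>i. - u i)) u)) * g (sh w (\<lambda>i. - u i))) UNIV"
      using infsum_reindex_bij_betw[OF bij_sh[of "\<lambda>i. - u i"],
          of "\<lambda>z. cnj (f (sh z u)) * g z"] by simp
    also have "\<dots> = infsum (\<lambda>z. cnj (f z) * g (sh z (\<lambda>i. - u i))) UNIV"
      by (simp add: sh_def)
    finally show ?thesis .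
  qed
  have "((\<lambda>z. \<Sum>u\<in>U1. cnj (f (sh z u)) * g z) has_sum
           (\<Sum>u\<in>U1. infsum (\<lambda>z. cnj (f (sh z u)) * g z) UNIV)) UNIV"
    by (intro has_sum_sum_fun finite_U1 has_sum_infsum l2_prod_summable g in_l2_shift f)
  moreover have "(\<Sum>u\<in>U1. infsum (\<lambda>z. cnj (f (sh z u)) * g z) UNIV) = S"
  proof -
    have "(\<Sum>u\<in>U1. infsum (\<lambda>z. cnj (f (sh z u)) * g z) UNIV) =
          (\<Sum>u\<in>U1. infsum (\<lambda>z. cnj (f z) * g (sh z (\<lambda>i. - u i))) UNIV)"
      by (simp add: eq)
    also have "\<dots> = S" unfolding S_def
      using sum.reindex_bij_betw[OF bij_neg_U1, of "\<lambda>u. infsum (\<lambda>z. cnj (f z) * g (sh z u)) UNIV"]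
      by simp
    finally show ?thesis .
  qed
  ultimately show "((\<lambda>z. cnj (lap f z) * g z) has_sum S) UNIV"
    by (simp add: lap_U1 sum_distrib_right)
qed

lemma has_sum_diff':
  fixes f g :: "'a \<Rightarrow> 'b::topological_ab_group_add"
  assumes "(f has_sum a) A" "(g has_sum b) A"
  shows "((\<lambda>x. f x - g x) has_sum (a - b)) A"
proof -
  have "((\<lambda>x. - g x) has_sum (- b)) A" using assms(2) by (simp add: has_sum_uminus)
  from has_sum_add[OF assms(1) this] show ?thesis by simp
qed

lemma has_sum_single:
  fixes c :: "'b::topological_comm_monoid_add"
  shows "((\<lambda>z. if z = x then c else 0) has_sum c) UNIV"
proof -
  have "((\<lambda>z. if z = x then c else 0) has_sum c) {x}"
    by (rule has_sum_finiteI) auto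
  moreover have "((\<lambda>z. if z = x then c else 0) has_sum c) {x} \<longleftrightarrow> ((\<lambda>z. if z = x then c else 0) has_sum c) UNIV"
    by (rule has_sum_cong_neutral) auto
  ultimately show ?thesis by blast
qed

lemma eig_identity:
  assumes f: "in_l2 f" and g: "in_l2 g"
    and ef: "anderson_op V1 f = (\<lambda>x. complex_of_real E1 * f x)"
    and eg: "anderson_op V2 g = (\<lambda>x. complex_of_real E2 * g x)"
  shows "((\<lambda>z. complex_of_real (V2 z - V1 z) * (cnj (f z) * g z)) has_sum
           (complex_of_real (E2 - E1) * l2_inner f g)) UNIV"
proof -
  obtain S where S1: "((\<lambda>z. cnj (f z) * lap g z) has_sum S) UNIV"
    and S2: "((\<lambda>z. cnj (lap f z) * g z) has_sum S) UNIV"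
    using lap_sym[OF f g] by blast
  have h1: "((\<lambda>z. complex_of_real (E2 - E1) * (cnj (f z) * g z)) has_sum
           (complex_of_real (E2 - E1) * l2_inner f g)) UNIV"
    unfolding l2_inner_def
    by (intro has_sum_cmult_right has_sum_infsum l2_prod_summable f g)
  have h2: "((\<lambda>z. complex_of_real (E2 - E1) * (cnj (f z) * g z) +
        (cnj (f z) * lap g z - cnj (lap f z) * g z)) has_sum
        (complex_of_real (E2 - E1) * l2_inner f g + (S - S))) UNIV"
    by (intro has_sum_add h1 has_sum_diff' S1 S2)
  have pf: "complex_of_real (V1 z) * f z = complex_of_real E1 * f z + lap f z" for z
    using fun_cong[OF ef, of z] by (simp add: anderson_op_lap algebra_simps)
  have pg: "complex_of_real (V2 z) * g z = complex_of_real E2 * g z + lap g z" for z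
    using fun_cong[OF eg, of z] by (simp add: anderson_op_lap algebra_simps)
  have pf': "complex_of_real (V1 z) * cnj (f z) = complex_of_real E1 * cnj (f z) + cnj (lap f z)" for z
    using arg_cong[OF pf[of z], of cnj] by simp
  have "complex_of_real (V2 z - V1 z) * (cnj (f z) * g z) =
        complex_of_real (E2 - E1) * (cnj (f z) * g z) +
        (cnj (f z) * lap g z - cnj (lap f z) * g z)" for z
  proof -
    have "complex_of_real (V2 z - V1 z) * (cnj (f z) * g z) =
          cnj (f z) * (complex_of_real (V2 z) * g z) - (complex_of_real (V1 z) * cnj (f z)) * g z"
      by (simp add: algebra_simps)
    also have "\<dots> = cnj (f z) * (complex_of_real E2 * g z + lap g z) -
        (complex_of_real E1 * cnj (f z) + cnj (lap f z)) * g z"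
      by (simp add: pg pf')
    also have "\<dots> = complex_of_real (E2 - E1) * (cnj (f z) * g z) +
        (cnj (f z) * lap g z - cnj (lap f z) * g z)"
      by (simp add: algebra_simps)
    finally show ?thesis .
  qed
  with h2 show ?thesis by simp
qed

lemma eig_orth:
  assumes "is_eigenfunction V E1 f" "is_eigenfunction V E2 g" "E1 \<noteq> E2"
  shows "l2_inner f g = 0"
proof -
  have h: "((\<lambda>z. complex_of_real (V z - V z) * (cnj (f z) * g z)) has_sum
           (complex_of_real (E2 - E1) * l2_inner f g)) UNIV"
    using assms by (intro eig_identity) (auto simp: is_eigenfunction_def)
  have eq: "(\<lambda>z. complex_of_real (V z - V z) * (cnj (f z) * g z)) = (\<lambda>z. 0)" by simp
  have "complex_of_real (E2 - E1) * l2_inner f g = 0"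
    using has_sum_unique[OF h[unfolded eq] has_sum_0_simp] .
  thus ?thesis using assms(3) by simp
qed

lemma eig_same_E:
  assumes "is_eigenfunction V1 E f" "is_eigenfunction V2 E g" "\<And>z. z \<noteq> x \<Longrightarrow> V1 z = V2 z"
  shows "(V2 x - V1 x) * (cnj (f x) * g x) = 0"
proof -
  have "((\<lambda>z. complex_of_real (V2 z - V1 z) * (cnj (f z) * g z)) has_sum
           (complex_of_real (E - E) * l2_inner f g)) UNIV"
    using assms by (intro eig_identity) (auto simp: is_eigenfunction_def)
  moreover have "(\<lambda>z. complex_of_real (V2 z - V1 z) * (cnj (f z) * g z)) =
     (\<lambda>z. if z = x then complex_of_real (V2 x - V1 x) * (cnj (f x) * g x) else 0)"
    using assms(3) by (intro ext) (auto simp del: of_real_diff)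
  ultimately show ?thesis using has_sum_unique[OF _ has_sum_single] by fastforce
qed

lemma cnj_mult_self: "cnj z * z = complex_of_real ((cmod z)\<^sup>2)"
  by (metis complex_norm_square mult.commute)

lemma anderson_op_scale: "anderson_op V (\<lambda>z. c * f z) = (\<lambda>z. c * anderson_op V f z)"
  by (auto simp: anderson_op_def fun_eq_iff sum_distrib_left algebra_simps)

lemma in_l2_scale: "in_l2 f \<Longrightarrow> in_l2 (\<lambda>z. c * f z)"
  unfolding in_l2_def by (simp add: norm_mult power_mult_distrib summable_on_cmult_right)

lemma l2_norm_sq:
  assumes "in_l2 f"
  shows "l2_inner f f = complex_of_real (infsum (\<lambda>z. (cmod (f z))\<^sup>2) UNIV)"
proof -
  have "l2_inner f f = infsum (\<lambda>z. complex_of_real ((cmod (f z))\<^sup>2)) UNIV"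
    unfolding l2_inner_def cnj_mult_self ..
  also have "\<dots> = complex_of_real (infsum (\<lambda>z. (cmod (f z))\<^sup>2) UNIV)"
  proof -
    have "((\<lambda>z. (cmod (f z))\<^sup>2) has_sum infsum (\<lambda>z. (cmod (f z))\<^sup>2) UNIV) UNIV"
      using assms unfolding in_l2_def by (rule has_sum_infsum)
    hence "((\<lambda>z. complex_of_real ((cmod (f z))\<^sup>2)) has_sum
        complex_of_real (infsum (\<lambda>z. (cmod (f z))\<^sup>2) UNIV)) UNIV"
      by (rule has_sum_of_real)
    thus ?thesis by (rule infsumI)
  qed
  finally show ?thesis .
qed

lemma l2_norm_pos:
  assumes "in_l2 f" "f \<noteq> (\<lambda>_. 0)"
  shows "infsum (\<lambda>z. (cmod (f z))\<^sup>2) UNIV > 0"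
proof -
  obtain y where y: "f y \<noteq> 0" using assms(2) by auto
  have "sum (\<lambda>z. (cmod (f z))\<^sup>2) {y} \<le> infsum (\<lambda>z. (cmod (f z))\<^sup>2) UNIV"
    using assms(1) unfolding in_l2_def by (intro finite_sum_le_infsum) auto
  hence "(cmod (f y))\<^sup>2 \<le> infsum (\<lambda>z. (cmod (f z))\<^sup>2) UNIV" by simp
  moreover have "(cmod (f y))\<^sup>2 > 0" using y by simp
  ultimately show ?thesis by linarith
qed

lemma normalized_eigfn:
  assumes "eigenvalue V E"
  shows "\<exists>e. is_eigenfunction V E e \<and> l2_inner e e = 1"
proof -
  obtain f where f: "is_eigenfunction V E f" using assms by (auto simp: eigenvalue_def)
  define N where "N = infsum (\<lambda>z. (cmod (f z))\<^sup>2) UNIV"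
  have N: "N > 0" unfolding N_def using f l2_norm_pos by (auto simp: is_eigenfunction_def)
  define c where "c = complex_of_real (1 / sqrt N)"
  define e where "e = (\<lambda>z. c * f z)"
  have c0: "c \<noteq> 0" using N by (simp add: c_def)
  have "is_eigenfunction V E e"
    using f c0 unfolding is_eigenfunction_def e_def
    by (auto simp: in_l2_scale anderson_op_scale fun_eq_iff)
  moreover have "l2_inner e e = 1"
  proof -
    have "l2_inner e e = infsum (\<lambda>z. (cnj c * c) * (cnj (f z) * f z)) UNIV"
      unfolding l2_inner_def e_def by (simp add: algebra_simps)
    also have "\<dots> = (cnj c * c) * l2_inner f f"
      unfolding l2_inner_def by (rule infsum_cmult_right') 
    also have "\<dots> = (cnj c * c) * complex_of_real N"
      using f by (simp add: l2_norm_sq is_eigenfunction_def N_def)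
    also have "\<dots> = 1"
    proof -
      have "cnj c * c = complex_of_real ((1 / sqrt N) * (1 / sqrt N))"
        by (simp only: c_def complex_cnj_complex_of_real of_real_mult)
      also have "(1 / sqrt N) * (1 / sqrt N) = 1 / N" using N
        using N by simp
      finally have "cnj c * c = complex_of_real (1 / N)" .
      hence "(cnj c * c) * complex_of_real N = complex_of_real (1 / N * N)"
        by (simp only: of_real_mult)
      thus ?thesis using N by simp
    qed
    finally show ?thesis .
  qed
  ultimately show ?thesis by blast
qed

lemma bessel_site:
  fixes e :: "real \<Rightarrow> ('d::finite) site \<Rightarrow> complex"
  assumes fin: "finite F"
    and l2: "\<And>E. E \<in> F \<Longrightarrow> in_l2 (e E)"
    and orth: "\<And>E E'. E \<in> F \<Longrightarrow> E' \<in> F \<Longrightarrow> l2_inner (e E) (e E') = (if E = E' then 1 else 0)"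
  shows "(\<Sum>E\<in>F. (cmod (e E y))\<^sup>2) \<le> 1"
proof -
  define s where "s = (\<Sum>E\<in>F. (cmod (e E y))\<^sup>2)"
  define c where "c E = cnj (e E y)" for E
  define g where "g z = (\<Sum>E\<in>F. c E * e E z)" for z
  have gy: "g y = complex_of_real s"
  proof -
    have "c E * e E y = complex_of_real ((cmod (e E y))\<^sup>2)" for E
      unfolding c_def by (rule cnj_mult_self)
    hence "g y = (\<Sum>E\<in>F. complex_of_real ((cmod (e E y))\<^sup>2))"
      unfolding g_def by (intro sum.cong) auto
    also have "\<dots> = complex_of_real s" unfolding s_def by (simp only: of_real_sum)
    finally show ?thesis .
  qed
  have expand: "cnj (g z) * g z = (\<Sum>E\<in>F. \<Sum>E'\<in>F. (cnj (c E) * c E') * (cnj (e E z) * e E' z))" for z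
    unfolding g_def cnj_sum sum_product by (intro sum.cong refl) (simp add: mult_ac)
  have hs: "((\<lambda>z. cnj (g z) * g z) has_sum
      (\<Sum>E\<in>F. \<Sum>E'\<in>F. (cnj (c E) * c E') * l2_inner (e E) (e E'))) UNIV"
    unfolding expand l2_inner_def
    by (intro has_sum_sum_fun fin has_sum_cmult_right has_sum_infsum l2_prod_summable l2) auto
  have eqs: "(\<Sum>E\<in>F. \<Sum>E'\<in>F. (cnj (c E) * c E') * l2_inner (e E) (e E')) =
        (\<Sum>E\<in>F. cnj (c E) * c E)"
  proof (rule sum.cong[OF refl])
    fix E assume E: "E \<in> F"
    have "(\<Sum>E'\<in>F. (cnj (c E) * c E') * l2_inner (e E) (e E')) =
          (\<Sum>E'\<in>F. if E' = E then cnj (c E) * c E else 0)"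
      by (rule sum.cong[OF refl]) (auto simp: orth E)
    also have "\<dots> = cnj (c E) * c E" using fin E by (simp add: sum.delta)
    finally show "(\<Sum>E'\<in>F. (cnj (c E) * c E') * l2_inner (e E) (e E')) = cnj (c E) * c E" .
  qed
  have eqs2: "(\<Sum>E\<in>F. cnj (c E) * c E) = complex_of_real s"
  proof -
    have "cnj (c E) * c E = complex_of_real ((cmod (e E y))\<^sup>2)" for E
      unfolding c_def using cnj_mult_self[of "cnj (e E y)"] by (simp only: complex_cnj_cnj complex_mod_cnj)
    hence "(\<Sum>E\<in>F. cnj (c E) * c E) = (\<Sum>E\<in>F. complex_of_real ((cmod (e E y))\<^sup>2))"
      by (intro sum.cong) auto
    also have "\<dots> = complex_of_real s" unfolding s_def by (simp only: of_real_sum)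
    finally show ?thesis .
  qed
  have hs': "((\<lambda>z. cnj (g z) * g z) has_sum complex_of_real s) UNIV" using hs unfolding eqs eqs2 .
  have "((\<lambda>z. Re (cnj (g z) * g z)) has_sum Re (complex_of_real s)) UNIV"
    using has_sum_Re[OF hs'] .
  hence hr: "((\<lambda>z. (cmod (g z))\<^sup>2) has_sum s) UNIV" by (simp only: cnj_mult_self Re_complex_of_real)
  have "sum (\<lambda>z. (cmod (g z))\<^sup>2) {y} \<le> s"
    using hr by (intro finite_sum_le_has_sum) auto
  hence "s * s \<le> s" using gy by (simp add: power2_eq_square abs_mult_self_eq)
  moreover have "s \<ge> 0" unfolding s_def by (simp add: sum_nonneg)
  ultimately have "s \<le> 1"
  proof (cases "s \<le> 1")
    case False
    hence "s * 1 < s * s" using \<open>s \<ge> 0\<close> by (intro mult_strict_left_mono) auto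
    thus ?thesis using \<open>s * s \<le> s\<close> by simp
  qed
  thus ?thesis unfolding s_def .
qed

lemma countable_eigenvalues: "countable {E. eigenvalue (V::('d::finite) site \<Rightarrow> real) E}"
proof -
  define Ev where "Ev = {E. eigenvalue V E}"
  define e where "e E = (SOME f. is_eigenfunction V E f \<and> l2_inner f f = 1)" for E
  have eE: "is_eigenfunction V E (e E) \<and> l2_inner (e E) (e E) = 1" if "E \<in> Ev" for E
  proof -
    have "\<exists>f. is_eigenfunction V E f \<and> l2_inner f f = 1"
      using normalized_eigfn[of V E] that unfolding Ev_def by simp
    thus ?thesis unfolding e_def by (rule someI_ex)
  qed
  have orth: "l2_inner (e E) (e E') = (if E = E' then 1 else 0)" if "E \<in> Ev" "E' \<in> Ev" for E E'
    using eE[OF that(1)] eE[OF that(2)] eig_orth[of V E "e E" E' "e E'"] by auto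
  have l2: "in_l2 (e E)" if "E \<in> Ev" for E using eE[OF that] by (simp add: is_eigenfunction_def)
  have fin: "finite {E\<in>Ev. (cmod (e E y))\<^sup>2 > 1 / real (Suc k)}" for y k
  proof (rule ccontr)
    let ?G = "{E\<in>Ev. (cmod (e E y))\<^sup>2 > 1 / real (Suc k)}"
    assume "infinite ?G"
    then obtain F where F: "finite F" "F \<subseteq> ?G" "card F = Suc (Suc k)"
      using infinite_arbitrarily_large[OF \<open>infinite ?G\<close>, of "Suc (Suc k)"] by blast
    have "(\<Sum>E\<in>F. (cmod (e E y))\<^sup>2) \<le> 1"
      using F by (intro bessel_site l2 orth) auto
    moreover have "(\<Sum>E\<in>F. 1 / real (Suc k)) < (\<Sum>E\<in>F. (cmod (e E y))\<^sup>2)"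
      using F by (intro sum_strict_mono) auto
    moreover have "(\<Sum>E\<in>F. 1 / real (Suc k)) = real (Suc (Suc k)) / real (Suc k)"
      using F by simp
    moreover have "real (Suc (Suc k)) / real (Suc k) > 1" by (simp add: field_simps)
    ultimately show False by linarith
  qed
  have sub: "Ev \<subseteq> (\<Union>y. \<Union>k. {E\<in>Ev. (cmod (e E y))\<^sup>2 > 1 / real (Suc k)})"
  proof
    fix E assume E: "E \<in> Ev"
    have "e E \<noteq> (\<lambda>_. 0)" using eE[OF E] by (simp add: is_eigenfunction_def)
    then obtain y where y: "e E y \<noteq> 0" by auto
    hence "(cmod (e E y))\<^sup>2 > 0" by simp
    then obtain n where n: "n > 0" "inverse (real n) < (cmod (e E y))\<^sup>2"
      using ex_inverse_of_nat_less by blast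
    hence "1 / real (Suc (n - 1)) < (cmod (e E y))\<^sup>2" by (simp add: inverse_eq_divide)
    then obtain k where "1 / real (Suc k) < (cmod (e E y))\<^sup>2" by blast
    thus "E \<in> (\<Union>y. \<Union>k. {E\<in>Ev. (cmod (e E y))\<^sup>2 > 1 / real (Suc k)})" using E by blast
  qed
  have "countable (\<Union>y. \<Union>k. {E\<in>Ev. (cmod (e E y))\<^sup>2 > 1 / real (Suc k)})"
    by (rule countable_UN[OF countableI_type], rule countable_UN[OF countableI_type], rule countable_finite[OF fin])
  thus ?thesis using sub countable_subset unfolding Ev_def by blast
qed

definition BadN :: "(('d::finite) site \<Rightarrow> real) \<Rightarrow> 'd site \<Rightarrow> bool" where
  "BadN W x \<longleftrightarrow> (\<exists>E f g. is_eigenfunction W E f \<and> f x = 0 \<and> is_eigenfunction W E g \<and> g x \<noteq> 0)"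

lemma anderson_op_upd_zero:
  assumes "f x = 0" shows "anderson_op (W(x:=v)) f = anderson_op W f"
proof (rule ext)
  fix z show "anderson_op (W(x:=v)) f z = anderson_op W f z"
    using assms by (cases "z = x") (simp_all add: anderson_op_lap)
qed

lemma eigfn_upd_zero:
  assumes "f x = 0" shows "is_eigenfunction (W(x:=v)) E f \<longleftrightarrow> is_eigenfunction W E f"
  using anderson_op_upd_zero[of f x W v, OF assms] by (simp add: is_eigenfunction_def)

lemma countable_bad_section:
  fixes W :: "('d::finite) site \<Rightarrow> real"
  shows "countable {v. BadN (W(x:=v)) x}"
proof -
  let ?B = "{v. BadN (W(x:=v)) x}"
  define EE where "EE v = (SOME E. \<exists>f g. is_eigenfunction (W(x:=v)) E f \<and> f x = 0 \<and>
       is_eigenfunction (W(x:=v)) E g \<and> g x \<noteq> 0)" for v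
  have EE: "\<exists>f g. is_eigenfunction (W(x:=v)) (EE v) f \<and> f x = 0 \<and>
       is_eigenfunction (W(x:=v)) (EE v) g \<and> g x \<noteq> 0" if "v \<in> ?B" for v
  proof -
    have "\<exists>E f g. is_eigenfunction (W(x:=v)) E f \<and> f x = 0 \<and>
       is_eigenfunction (W(x:=v)) E g \<and> g x \<noteq> 0" using that by (simp add: BadN_def)
    thus ?thesis unfolding EE_def by (rule someI_ex)
  qed
  have img: "EE ` ?B \<subseteq> {E. eigenvalue W E}"
  proof
    fix E assume "E \<in> EE ` ?B"
    then obtain v where v: "v \<in> ?B" "E = EE v" by blast
    then obtain f where "is_eigenfunction (W(x:=v)) E f" "f x = 0" using EE[OF v(1)] by blast
    hence "is_eigenfunction W E f" using eigfn_upd_zero by blast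
    thus "E \<in> {E. eigenvalue W E}" by (auto simp: eigenvalue_def)
  qed
  have inj: "inj_on EE ?B"
  proof (rule inj_onI)
    fix v1 v2 assume v1: "v1 \<in> ?B" and v2: "v2 \<in> ?B" and eq: "EE v1 = EE v2"
    obtain g1 where g1: "is_eigenfunction (W(x:=v1)) (EE v1) g1" "g1 x \<noteq> 0" using EE[OF v1] by blast
    obtain g2 where g2: "is_eigenfunction (W(x:=v2)) (EE v1) g2" "g2 x \<noteq> 0" using EE[OF v2] eq by auto
    have "complex_of_real ((W(x:=v2)) x - (W(x:=v1)) x) * (cnj (g1 x) * g2 x) = 0"
      using eig_same_E[of "W(x:=v1)" "EE v1" g1 "W(x:=v2)" g2 x, OF g1(1) g2(1)] by simp
    thus "v1 = v2" using g1(2) g2(2) by simp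
  qed
  have "countable (EE ` ?B)" using img countable_eigenvalues countable_subset by blast
  thus ?thesis using inj countable_image_inj_on by blast
qed

lemma in_l2_diff:
  assumes "in_l2 f" "in_l2 g" shows "in_l2 (\<lambda>z. f z - g z)"
proof -
  have "(\<lambda>z. 2 * (cmod (f z))\<^sup>2 + 2 * (cmod (g z))\<^sup>2) summable_on UNIV"
    using assms unfolding in_l2_def by (intro summable_on_add summable_on_cmult_right)
  thus ?thesis unfolding in_l2_def
  proof (rule summable_on_comparison_test)
    fix z
    have "cmod (f z - g z) \<le> cmod (f z) + cmod (g z)" by (rule norm_triangle_ineq4)
    hence "(cmod (f z - g z))\<^sup>2 \<le> (cmod (f z) + cmod (g z))\<^sup>2"
      by (intro power_mono) auto
    also have "\<dots> \<le> 2 * (cmod (f z))\<^sup>2 + 2 * (cmod (g z))\<^sup>2"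
      by (smt (verit) sum_squares_bound power2_sum)
    finally show "(cmod (f z - g z))\<^sup>2 \<le> 2 * (cmod (f z))\<^sup>2 + 2 * (cmod (g z))\<^sup>2" .
  qed simp
qed

lemma anderson_op_lincomb:
  "anderson_op V (\<lambda>z. a * f z - b * g z) = (\<lambda>z. a * anderson_op V f z - b * anderson_op V g z)"
proof (rule ext)
  fix z
  have "lap (\<lambda>z. a * f z - b * g z) z = a * lap f z - b * lap g z"
    by (simp add: lap_def sum_subtractf sum_distrib_left)
  thus "anderson_op V (\<lambda>z. a * f z - b * g z) z = a * anderson_op V f z - b * anderson_op V g z"
    by (simp add: anderson_op_lap right_diff_distrib mult.left_commute)
qed

lemma simple_of_noBad:
  assumes nb: "\<And>x. \<not> BadN W x" and ev: "eigenvalue W E"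
  shows "simple_eigenvalue W E"
  unfolding simple_eigenvalue_def
proof (intro conjI ev allI impI)
  fix f g assume f: "is_eigenfunction W E f" and g: "is_eigenfunction W E g"
  obtain x where fx: "f x \<noteq> 0" using f by (auto simp: is_eigenfunction_def)
  define h where "h z = f x * g z - g x * f z" for z
  show "\<exists>c. g = (\<lambda>z. c * f z)"
  proof (cases "h = (\<lambda>_. 0)")
    case True
    have "g z = (g x / f x) * f z" for z
    proof -
      have "f x * g z - g x * f z = 0" using fun_cong[OF True, of z] by (simp add: h_def)
      thus ?thesis using fx by (simp add: field_simps)
    qed
    thus ?thesis by blast
  next
    case False
    have "in_l2 h" unfolding h_def using f g
      by (intro in_l2_diff in_l2_scale) (auto simp: is_eigenfunction_def)
    moreover have "anderson_op W h = (\<lambda>z. complex_of_real E * h z)"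
      using f g unfolding h_def anderson_op_lincomb
      by (auto simp: is_eigenfunction_def fun_eq_iff algebra_simps)
    ultimately have "is_eigenfunction W E h" using False by (simp add: is_eigenfunction_def)
    moreover have "h x = 0" by (simp add: h_def mult.commute)
    ultimately have "BadN W x" unfolding BadN_def using f fx by blast
    thus ?thesis using nb by blast
  qed
qed

lemma tendsto_apply_fun:
  fixes X :: "'k \<Rightarrow> 'a \<Rightarrow> 'b::topological_space"
  assumes "(X \<longlongrightarrow> l) F" shows "((\<lambda>k. X k z) \<longlongrightarrow> l z) F"
  using continuous_on_tendsto_compose[OF continuous_on_product_coordinates[of z] assms] by simp

lemma compact_box:
  fixes S :: "'b::topological_space set"
  assumes "compact S" shows "compact {f :: 'a \<Rightarrow> 'b. \<forall>z. f z \<in> S}"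
proof -
  have "compactin (product_topology (\<lambda>_. euclidean) UNIV) (Pi\<^sub>E (UNIV::'a set) (\<lambda>_. S))"
    using assms by (subst compactin_PiE) auto
  hence "compact (Pi\<^sub>E (UNIV::'a set) (\<lambda>_. S))"
    unfolding euclidean_product_topology by simp
  moreover have "Pi\<^sub>E (UNIV::'a set) (\<lambda>_. S) = {f. \<forall>z. f z \<in> S}"
    by (auto simp: PiE_UNIV_domain Pi_def)
  ultimately show ?thesis by simp
qed

definition Kn :: "nat \<Rightarrow> (real \<times> (('d::finite) site \<Rightarrow> complex) \<times> ('d site \<Rightarrow> complex)) set" where
  "Kn n = {(E, f, g). \<bar>E\<bar> \<le> real n \<and> (\<forall>z. f z \<in> cball 0 (real n)) \<and> (\<forall>z. g z \<in> cball 0 (real n))}"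

lemma compact_Kn: "compact (Kn n)"
proof -
  have eq: "Kn n = cball 0 (real n) \<times> ({f. \<forall>z. f z \<in> cball 0 (real n)} \<times> {f. \<forall>z. f z \<in> cball 0 (real n)})"
    by (auto simp: Kn_def dist_real_def)
  show ?thesis unfolding eq by (intro compact_Times compact_box compact_cball)
qed

definition condA :: "nat \<Rightarrow> ('d::finite) site \<Rightarrow> 'd site \<Rightarrow> ('d site \<Rightarrow> real) \<Rightarrow> real \<Rightarrow>
     real \<Rightarrow> ('d site \<Rightarrow> complex) \<Rightarrow> ('d site \<Rightarrow> complex) \<Rightarrow> bool" where
  "condA n y x W v E f g \<longleftrightarrow>
     (\<forall>F. finite F \<longrightarrow> (\<Sum>z\<in>F. (cmod (f z))\<^sup>2) \<le> real n) \<and>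
     (\<forall>F. finite F \<longrightarrow> (\<Sum>z\<in>F. (cmod (g z))\<^sup>2) \<le> real n) \<and>
     f y = 1 \<and> f x = 0 \<and> g x = 1 \<and>
     (\<forall>z. - lap f z + complex_of_real ((W(x:=v)) z) * f z = complex_of_real E * f z) \<and>
     (\<forall>z. - lap g z + complex_of_real ((W(x:=v)) z) * g z = complex_of_real E * g z)"

definition Aset :: "nat \<Rightarrow> ('d::finite) site \<Rightarrow> 'd site \<Rightarrow> (('d site \<Rightarrow> real) \<times> real) set" where
  "Aset n y x = {(W, v). \<exists>E f g. (E, f, g) \<in> Kn n \<and> condA n y x W v E f g}"

lemma lim_upd:
  assumes "W \<longlonglongrightarrow> W0" "v \<longlonglongrightarrow> v0"
  shows "(\<lambda>k. ((W k)(x := v k)) z) \<longlonglongrightarrow> (W0(x:=v0)) z"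
  using assms tendsto_apply_fun[OF assms(1), of z] by (cases "z = x") auto

lemma lim_lap:
  assumes "f \<longlonglongrightarrow> f0"
  shows "(\<lambda>k. lap (f k) z) \<longlonglongrightarrow> lap f0 z"
  unfolding lap_def by (intro tendsto_sum) (rule tendsto_apply_fun[OF assms])

lemma closed_Aset:
  fixes x :: "('d::finite) site"
  shows "closed (Aset n y x)"
  unfolding closed_sequential_limits
proof (intro allI impI, elim conjE)
  fix q :: "nat \<Rightarrow> ('d site \<Rightarrow> real) \<times> real" and l
  assume q: "\<forall>k. q k \<in> Aset n y x" and ql: "q \<longlonglongrightarrow> l"
  have "\<forall>k. \<exists>p. p \<in> Kn n \<and> condA n y x (fst (q k)) (snd (q k)) (fst p) (fst (snd p)) (snd (snd p))"
  proof
    fix k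
    obtain W v where Wv: "q k = (W, v)" by (cases "q k")
    have "q k \<in> Aset n y x" using q by blast
    hence "\<exists>E f g. (E, f, g) \<in> Kn n \<and> condA n y x W v E f g" using Wv by (simp add: Aset_def)
    then obtain E f g where "(E, f, g) \<in> Kn n" "condA n y x W v E f g" by blast
    thus "\<exists>p. p \<in> Kn n \<and> condA n y x (fst (q k)) (snd (q k)) (fst p) (fst (snd p)) (snd (snd p))"
      using Wv by (intro exI[of _ "(E, f, g)"]) simp
  qed
  then obtain p where p: "\<And>k. p k \<in> Kn n"
     "\<And>k. condA n y x (fst (q k)) (snd (q k)) (fst (p k)) (fst (snd (p k))) (snd (snd (p k)))"
    by metis
  obtain p0 r where p0: "p0 \<in> Kn n" and r: "strict_mono r" and pr: "(p \<circ> r) \<longlonglongrightarrow> p0"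
    using compact_imp_seq_compact[OF compact_Kn] p(1) unfolding seq_compact_def by metis
  define W where "W k = fst (q (r k))" for k
  define v where "v k = snd (q (r k))" for k
  define E where "E k = fst (p (r k))" for k
  define f where "f k = fst (snd (p (r k)))" for k
  define g where "g k = snd (snd (p (r k)))" for k
  obtain W0 v0 where l: "l = (W0, v0)" by (cases l)
  obtain E0 f0 g0 where p0e: "p0 = (E0, f0, g0)" by (cases p0) auto
  have qr: "(q \<circ> r) \<longlonglongrightarrow> l" by (rule LIMSEQ_subseq_LIMSEQ[OF ql r])
  have W: "W \<longlonglongrightarrow> W0" unfolding W_def using tendsto_fst[OF qr] l by (simp add: o_def)
  have v: "v \<longlonglongrightarrow> v0" unfolding v_def using tendsto_snd[OF qr] l by (simp add: o_def)
  have E: "E \<longlonglongrightarrow> E0" unfolding E_def using tendsto_fst[OF pr] p0e by (simp add: o_def)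
  have f: "f \<longlonglongrightarrow> f0" unfolding f_def using tendsto_fst[OF tendsto_snd[OF pr]] p0e by (simp add: o_def)
  have g: "g \<longlonglongrightarrow> g0" unfolding g_def using tendsto_snd[OF tendsto_snd[OF pr]] p0e by (simp add: o_def)
  have c: "\<And>k. condA n y x (W k) (v k) (E k) (f k) (g k)"
    using p(2) unfolding W_def v_def E_def f_def g_def by blast
  have fz: "(\<lambda>k. f k z) \<longlonglongrightarrow> f0 z" for z by (rule tendsto_apply_fun[OF f])
  have gz: "(\<lambda>k. g k z) \<longlonglongrightarrow> g0 z" for z by (rule tendsto_apply_fun[OF g])
  have sumf: "(\<Sum>z\<in>F. (cmod (f0 z))\<^sup>2) \<le> real n" if "finite F" for F
  proof (rule LIMSEQ_le_const2)
    show "(\<lambda>k. \<Sum>z\<in>F. (cmod (f k z))\<^sup>2) \<longlonglongrightarrow> (\<Sum>z\<in>F. (cmod (f0 z))\<^sup>2)"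
      by (intro tendsto_intros fz)
    show "\<exists>N. \<forall>k\<ge>N. (\<Sum>z\<in>F. (cmod (f k z))\<^sup>2) \<le> real n" using c that by (auto simp: condA_def)
  qed
  have sumg: "(\<Sum>z\<in>F. (cmod (g0 z))\<^sup>2) \<le> real n" if "finite F" for F
  proof (rule LIMSEQ_le_const2)
    show "(\<lambda>k. \<Sum>z\<in>F. (cmod (g k z))\<^sup>2) \<longlonglongrightarrow> (\<Sum>z\<in>F. (cmod (g0 z))\<^sup>2)"
      by (intro tendsto_intros gz)
    show "\<exists>N. \<forall>k\<ge>N. (\<Sum>z\<in>F. (cmod (g k z))\<^sup>2) \<le> real n" using c that by (auto simp: condA_def)
  qed
  have const_lim: "a = b" if "(\<lambda>k. h k) \<longlonglongrightarrow> a" "\<And>k. h k = b" for h :: "nat \<Rightarrow> complex" and a b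
  proof -
    have "h = (\<lambda>k. b)" using that(2) by (intro ext) simp
    thus ?thesis using LIMSEQ_unique[OF that(1)] tendsto_const[of b sequentially] by simp
  qed
  have f0y: "f0 y = 1" using const_lim[OF fz[of y]] c by (auto simp: condA_def)
  have f0x: "f0 x = 0" using const_lim[OF fz[of x]] c by (auto simp: condA_def)
  have g0x: "g0 x = 1" using const_lim[OF gz[of x]] c by (auto simp: condA_def)
  have eqlim: "- lap h0 z + complex_of_real ((W0(x:=v0)) z) * h0 z = complex_of_real E0 * h0 z"
    if h: "h \<longlonglongrightarrow> h0" and hk: "\<And>k. - lap (h k) z + complex_of_real (((W k)(x:=v k)) z) * h k z = complex_of_real (E k) * h k z"
    for h h0 z
  proof -
    have L: "(\<lambda>k. - lap (h k) z + complex_of_real (((W k)(x:=v k)) z) * h k z) \<longlonglongrightarrow>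
          - lap h0 z + complex_of_real ((W0(x:=v0)) z) * h0 z"
      by (rule tendsto_add[OF tendsto_minus[OF lim_lap[OF h]] tendsto_mult[OF tendsto_of_real[OF lim_upd[OF W v]] tendsto_apply_fun[OF h]]])
    have R: "(\<lambda>k. complex_of_real (E k) * h k z) \<longlonglongrightarrow> complex_of_real E0 * h0 z"
      by (rule tendsto_mult[OF tendsto_of_real[OF E] tendsto_apply_fun[OF h]])
    show ?thesis using LIMSEQ_unique[OF L] R hk by simp
  qed
  have ef: "- lap f0 z + complex_of_real ((W0(x:=v0)) z) * f0 z = complex_of_real E0 * f0 z" for z
    using eqlim[OF f, of z] c unfolding condA_def by blast
  have eg: "- lap g0 z + complex_of_real ((W0(x:=v0)) z) * g0 z = complex_of_real E0 * g0 z" for z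
    using eqlim[OF g, of z] c unfolding condA_def by blast
  have "condA n y x W0 v0 E0 f0 g0"
    unfolding condA_def using sumf sumg f0y f0x g0x ef eg by blast
  thus "l \<in> Aset n y x" using p0 p0e l by (auto simp: Aset_def)
qed

lemma l2_partial_le:
  assumes "in_l2 f" "finite F"
  shows "(\<Sum>z\<in>F. (cmod (f z))\<^sup>2) \<le> infsum (\<lambda>z. (cmod (f z))\<^sup>2) UNIV"
  using assms unfolding in_l2_def by (intro finite_sum_le_infsum) auto

lemma l2_pointwise_le:
  assumes "in_l2 f"
  shows "cmod (f z) \<le> 1 + infsum (\<lambda>z. (cmod (f z))\<^sup>2) UNIV"
proof -
  have s: "(cmod (f z))\<^sup>2 \<le> infsum (\<lambda>z. (cmod (f z))\<^sup>2) UNIV"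
    using l2_partial_le[OF assms, of "{z}"] by simp
  show ?thesis
  proof (cases "cmod (f z) \<le> 1")
    case True
    moreover have "infsum (\<lambda>z. (cmod (f z))\<^sup>2) UNIV \<ge> 0" by (simp add: infsum_nonneg)
    ultimately show ?thesis by linarith
  next
    case False
    hence "cmod (f z) * 1 \<le> cmod (f z) * cmod (f z)" by (intro mult_left_mono) auto
    hence "cmod (f z) \<le> (cmod (f z))\<^sup>2" by (simp add: power2_eq_square)
    thus ?thesis using s by linarith
  qed
qed

lemma in_l2_of_bounded:
  assumes "\<And>F. finite F \<Longrightarrow> (\<Sum>z\<in>F. (cmod (f z))\<^sup>2) \<le> B"
  shows "in_l2 f"
  unfolding in_l2_def
  by (rule nonneg_bdd_above_summable_on) (use assms in \<open>auto intro!: bdd_aboveI2\<close>)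

lemma eig_eq_lap:
  "anderson_op W f = (\<lambda>z. complex_of_real E * f z) \<longleftrightarrow>
   (\<forall>z. - lap f z + complex_of_real (W z) * f z = complex_of_real E * f z)"
  by (simp add: fun_eq_iff anderson_op_lap)

lemma bad_iff_Aset:
  fixes x :: "('d::finite) site"
  shows "BadN (W(x:=v)) x \<longleftrightarrow> (\<exists>n y. (W, v) \<in> Aset n y x)"
proof
  assume "\<exists>n y. (W, v) \<in> Aset n y x"
  then obtain n y E f g where K: "(E, f, g) \<in> Kn n" and c: "condA n y x W v E f g"
    by (auto simp: Aset_def)
  have "is_eigenfunction (W(x:=v)) E f"
    unfolding is_eigenfunction_def eig_eq_lap
  proof (intro conjI)
    show "in_l2 f" using c by (intro in_l2_of_bounded[of f "real n"]) (auto simp: condA_def)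
    show "f \<noteq> (\<lambda>_. 0)"
    proof
      assume "f = (\<lambda>_. 0)" hence "f y = 0" by simp
      thus False using c by (simp add: condA_def)
    qed
  qed (use c in \<open>auto simp: condA_def\<close>)
  moreover have "is_eigenfunction (W(x:=v)) E g"
    unfolding is_eigenfunction_def eig_eq_lap
  proof (intro conjI)
    show "in_l2 g" using c by (intro in_l2_of_bounded[of g "real n"]) (auto simp: condA_def)
    show "g \<noteq> (\<lambda>_. 0)"
    proof
      assume "g = (\<lambda>_. 0)" hence "g x = 0" by simp
      thus False using c by (simp add: condA_def)
    qed
  qed (use c in \<open>auto simp: condA_def\<close>)
  ultimately show "BadN (W(x:=v)) x" using c unfolding BadN_def condA_def by force
next
  assume "BadN (W(x:=v)) x"
  then obtain E f g where f: "is_eigenfunction (W(x:=v)) E f" and fx: "f x = 0"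
    and g: "is_eigenfunction (W(x:=v)) E g" and gx: "g x \<noteq> 0"
    unfolding BadN_def by blast
  obtain y where fy: "f y \<noteq> 0" using f by (auto simp: is_eigenfunction_def)
  define f' where "f' = (\<lambda>z. (1 / f y) * f z)"
  define g' where "g' = (\<lambda>z. (1 / g x) * g z)"
  have scale_eig: "is_eigenfunction (W(x:=v)) E (\<lambda>z. c * h z)"
    if h: "is_eigenfunction (W(x:=v)) E h" and c: "c \<noteq> 0" for h c
  proof -
    have l: "in_l2 (\<lambda>z. c * h z)" using h by (intro in_l2_scale) (simp add: is_eigenfunction_def)
    obtain z0 where "h z0 \<noteq> 0" using h by (auto simp: is_eigenfunction_def)
    hence nz: "(\<lambda>z. c * h z) \<noteq> (\<lambda>_. 0)" using c by (auto simp: fun_eq_iff)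
    have "anderson_op (W(x:=v)) (\<lambda>z. c * h z) = (\<lambda>z. c * anderson_op (W(x:=v)) h z)"
      by (rule anderson_op_scale)
    also have "\<dots> = (\<lambda>z. c * (complex_of_real E * h z))"
      using h by (simp only: is_eigenfunction_def)
    also have "\<dots> = (\<lambda>z. complex_of_real E * (c * h z))" by (simp only: mult.left_commute)
    finally show ?thesis using l nz unfolding is_eigenfunction_def by blast
  qed
  have f': "is_eigenfunction (W(x:=v)) E f'" unfolding f'_def using f fy by (intro scale_eig) auto
  have g': "is_eigenfunction (W(x:=v)) E g'" unfolding g'_def using g gx by (intro scale_eig) auto
  define Sf where "Sf = infsum (\<lambda>z. (cmod (f' z))\<^sup>2) UNIV"
  define Sg where "Sg = infsum (\<lambda>z. (cmod (g' z))\<^sup>2) UNIV"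
  have Sf0: "Sf \<ge> 0" unfolding Sf_def by (simp add: infsum_nonneg)
  have Sg0: "Sg \<ge> 0" unfolding Sg_def by (simp add: infsum_nonneg)
  define n where "n = nat \<lceil>\<bar>E\<bar> + Sf + Sg + 1\<rceil>"
  have n: "real n \<ge> \<bar>E\<bar> + Sf + Sg + 1" unfolding n_def by linarith
  have l2f: "in_l2 f'" and l2g: "in_l2 g'" using f' g' by (auto simp: is_eigenfunction_def)
  have "(E, f', g') \<in> Kn n"
    unfolding Kn_def using l2_pointwise_le[OF l2f] l2_pointwise_le[OF l2g] n Sf0 Sg0
    unfolding Sf_def[symmetric] Sg_def[symmetric]
    by (auto simp: dist_norm) (smt (verit))+
  moreover have "condA n y x W v E f' g'"
    unfolding condA_def
  proof (intro conjI allI impI)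
    fix F :: "'d site set" assume "finite F"
    show "(\<Sum>z\<in>F. (cmod (f' z))\<^sup>2) \<le> real n"
      using l2_partial_le[OF l2f \<open>finite F\<close>] n Sg0 unfolding Sf_def[symmetric] by linarith
    show "(\<Sum>z\<in>F. (cmod (g' z))\<^sup>2) \<le> real n"
      using l2_partial_le[OF l2g \<open>finite F\<close>] n Sf0 unfolding Sg_def[symmetric] by linarith
  next
    show "f' y = 1" using fy by (simp add: f'_def)
    show "f' x = 0" using fx by (simp add: f'_def)
    show "g' x = 1" using gx by (simp add: g'_def)
  next
    fix z
    show "- lap f' z + complex_of_real ((W(x:=v)) z) * f' z = complex_of_real E * f' z"
      using f' unfolding is_eigenfunction_def eig_eq_lap by blast
    show "- lap g' z + complex_of_real ((W(x:=v)) z) * g' z = complex_of_real E * g' z"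
      using g' unfolding is_eigenfunction_def eig_eq_lap by blast
  qed
  ultimately show "\<exists>n y. (W, v) \<in> Aset n y x" unfolding Aset_def by blast
qed

lemma bad_set_borel:
  fixes x :: "('d::finite) site"
  shows "{p :: ('d site \<Rightarrow> real) \<times> real. BadN ((fst p)(x := snd p)) x} \<in> sets borel"
proof -
  have "{p :: ('d site \<Rightarrow> real) \<times> real. BadN ((fst p)(x := snd p)) x} =
        (\<Union>m\<in>UNIV. Aset (fst m) (snd m) x)"
    using bad_iff_Aset by fastforce
  also have "\<dots> \<in> sets borel"
    by (intro sets.countable_UN) (auto intro: borel_closed closed_Aset)
  finally show ?thesis .
qed

lemma AE_not_bad:
  fixes V :: "'a \<Rightarrow> ('d::finite) site \<Rightarrow> real" and x :: "'d site"
  assumes am: "anderson_model M V \<rho>"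
  shows "AE \<omega> in M. \<not> BadN (V \<omega>) x"
proof -
  interpret prob_space M using am by (simp add: anderson_model_def)
  have ind: "indep_vars (\<lambda>_. borel) (\<lambda>s \<omega>. V \<omega> s) UNIV"
    using am by (simp add: anderson_model_def)
  have dist: "distributed M lborel (\<lambda>\<omega>. V \<omega> x) (\<lambda>t. ennreal (\<rho> t))"
    using am by (simp add: anderson_model_def)
  let ?K = "UNIV - {x}"
  have i0: "indep_var (Pi\<^sub>M ?K (\<lambda>_. borel)) (\<lambda>\<omega>. restrict (\<lambda>i. V \<omega> i) ?K)
                      (Pi\<^sub>M {x} (\<lambda>_. borel)) (\<lambda>\<omega>. restrict (\<lambda>i. V \<omega> i) {x})"
    by (rule indep_var_restrict[OF ind]) auto
  define Y1 :: "('d site \<Rightarrow> real) \<Rightarrow> ('d site \<Rightarrow> real)" where "Y1 r = (\<lambda>i. if i = x then 0 else r i)" for r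
  have mY1: "Y1 \<in> measurable (Pi\<^sub>M ?K (\<lambda>_. borel)) borel"
    unfolding Y1_def
  proof (rule measurable_coordinatewise_then_product)
    fix i :: "'d site"
    show "(\<lambda>r. if i = x then 0 else r i) \<in> borel_measurable (Pi\<^sub>M ?K (\<lambda>_. borel))"
    proof (cases "i = x")
      case True thus ?thesis by simp
    next
      case False
      hence "(\<lambda>r. r i) \<in> measurable (Pi\<^sub>M ?K (\<lambda>_. borel)) borel"
        by (intro measurable_component_singleton) simp
      thus ?thesis using False by simp
    qed
  qed
  define X1 :: "('d site \<Rightarrow> real) \<Rightarrow> ('d site \<Rightarrow> real)" where "X1 r = (\<lambda>i. if i = x then r x else 0)" for r
  have mX1: "X1 \<in> measurable (Pi\<^sub>M {x} (\<lambda>_. borel)) borel"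
    unfolding X1_def
  proof (rule measurable_coordinatewise_then_product)
    fix i :: "'d site"
    have "(\<lambda>r. r x) \<in> measurable (Pi\<^sub>M {x} (\<lambda>_. borel)) (borel :: real measure)"
      by (intro measurable_component_singleton) simp
    thus "(\<lambda>r. if i = x then r x else 0) \<in> borel_measurable (Pi\<^sub>M {x} (\<lambda>_. borel))"
      by (cases "i = x") simp_all
  qed
  define Y where "Y \<omega> = (V \<omega>)(x := 0)" for \<omega>
  define X where "X \<omega> = (\<lambda>i. if i = x then V \<omega> x else 0)" for \<omega>
  have "indep_var borel (Y1 \<circ> (\<lambda>\<omega>. restrict (\<lambda>i. V \<omega> i) ?K)) borel (X1 \<circ> (\<lambda>\<omega>. restrict (\<lambda>i. V \<omega> i) {x}))"
    by (rule indep_var_compose[OF i0 mY1 mX1])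
  moreover have "Y1 \<circ> (\<lambda>\<omega>. restrict (\<lambda>i. V \<omega> i) ?K) = Y"
    by (rule ext, rule ext) (simp add: Y1_def Y_def fun_upd_def restrict_def)
  moreover have "X1 \<circ> (\<lambda>\<omega>. restrict (\<lambda>i. V \<omega> i) {x}) = X"
    by (rule ext, rule ext) (simp add: X1_def X_def restrict_def)
  ultimately have iYX: "indep_var borel Y borel X" by simp
  hence rvY: "random_variable borel Y" and rvX: "random_variable borel X"
    and prod: "distr M borel Y \<Otimes>\<^sub>M distr M borel X = distr M (borel \<Otimes>\<^sub>M borel) (\<lambda>\<omega>. (Y \<omega>, X \<omega>))"
    by (auto simp: indep_var_distribution_eq)
  define A0 where "A0 = {p :: ('d site \<Rightarrow> real) \<times> real. BadN ((fst p)(x := snd p)) x}"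
  have A0: "A0 \<in> sets (borel \<Otimes>\<^sub>M borel)"
    unfolding A0_def borel_prod by (rule bad_set_borel)
  define A where "A = (\<lambda>p::('d site \<Rightarrow> real) \<times> ('d site \<Rightarrow> real). (fst p, snd p x)) -` A0"
  have mpx: "(\<lambda>p::('d site \<Rightarrow> real) \<times> ('d site \<Rightarrow> real). (fst p, snd p x)) \<in>
       measurable (borel \<Otimes>\<^sub>M borel) (borel \<Otimes>\<^sub>M borel)"
  proof (rule measurable_Pair)
    show "(\<lambda>p::('d site \<Rightarrow> real) \<times> ('d site \<Rightarrow> real). fst p) \<in> measurable (borel \<Otimes>\<^sub>M borel) borel"
      by (rule measurable_fst)
    have "(\<lambda>U::'d site \<Rightarrow> real. U x) \<in> borel_measurable borel"
      by (rule borel_measurable_continuous_onI) simp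
    thus "(\<lambda>p::('d site \<Rightarrow> real) \<times> ('d site \<Rightarrow> real). snd p x) \<in> measurable (borel \<Otimes>\<^sub>M borel) borel"
      by (rule measurable_compose[OF measurable_snd])
  qed
  have A: "A \<in> sets (borel \<Otimes>\<^sub>M borel)"
    using measurable_sets[OF mpx A0] unfolding A_def by (simp add: space_pair_measure)
  interpret D: prob_space "distr M borel X" by (rule prob_space_distr[OF rvX])
  have sec0: "emeasure (distr M borel X) (Pair W -` A) = 0" for W
  proof -
    define C where "C = {v. BadN (W(x:=v)) x}"
    have eqs: "Pair W -` A = (\<lambda>U. U x) -` C" by (auto simp: A_def A0_def C_def)
    have Cc: "countable C" unfolding C_def by (rule countable_bad_section)
    have nl: "C \<in> null_sets lborel" by (rule countable_imp_null_set_lborel[OF Cc])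
    let ?X0 = "\<lambda>\<omega>. V \<omega> x"
    have Xl: "?X0 \<in> measurable M lborel" using dist by (simp add: distributed_def)
    have PA: "Pair W -` A \<in> sets borel" using A by (rule sets_Pair1)
    have "emeasure (distr M borel X) (Pair W -` A) = emeasure M (X -` (Pair W -` A) \<inter> space M)"
      by (rule emeasure_distr[OF rvX PA])
    also have "X -` (Pair W -` A) \<inter> space M = ?X0 -` C \<inter> space M"
      unfolding eqs by (auto simp: X_def)
    also have "emeasure M (?X0 -` C \<inter> space M) = emeasure (distr M lborel ?X0) C"
      by (rule emeasure_distr[OF Xl, symmetric]) (use nl in auto)
    also have "distr M lborel ?X0 = density lborel (\<lambda>t. ennreal (\<rho> t))"
      using dist by (simp add: distributed_def)
    also have "C \<in> null_sets (density lborel (\<lambda>t. ennreal (\<rho> t)))"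
    proof -
      have fm: "(\<lambda>t. ennreal (\<rho> t)) \<in> borel_measurable lborel" using dist by (simp add: distributed_def)
      show ?thesis unfolding null_sets_density_iff[OF fm]
        using nl AE_not_in[OF nl] by (auto elim: eventually_mono)
    qed
    hence "emeasure (density lborel (\<lambda>t. ennreal (\<rho> t))) C = 0" by auto
    finally show ?thesis .
  qed
  define N where "N = (\<lambda>\<omega>. (Y \<omega>, X \<omega>)) -` A \<inter> space M"
  have mYX: "(\<lambda>\<omega>. (Y \<omega>, X \<omega>)) \<in> measurable M (borel \<Otimes>\<^sub>M borel)"
    using rvY rvX by (rule measurable_Pair)
  have "emeasure M N = emeasure (distr M (borel \<Otimes>\<^sub>M borel) (\<lambda>\<omega>. (Y \<omega>, X \<omega>))) A"
    unfolding N_def by (rule emeasure_distr[OF mYX A, symmetric])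
  also have "\<dots> = emeasure (distr M borel Y \<Otimes>\<^sub>M distr M borel X) A" by (simp add: prod)
  also have "\<dots> = (\<integral>\<^sup>+W. emeasure (distr M borel X) (Pair W -` A) \<partial>distr M borel Y)"
    by (rule D.emeasure_pair_measure_alt) (use A in simp)
  also have "\<dots> = 0" by (simp add: sec0)
  finally have N0: "emeasure M N = 0" .
  have Nn: "N \<in> null_sets M"
    using N0 measurable_sets[OF mYX A] unfolding N_def by (auto simp: null_sets_def)
  show ?thesis
  proof (rule AE_I'[OF Nn])
    show "{\<omega> \<in> space M. \<not> \<not> BadN (V \<omega>) x} \<subseteq> N"
    proof
      fix \<omega> assume "\<omega> \<in> {\<omega> \<in> space M. \<not> \<not> BadN (V \<omega>) x}"
      moreover have "(Y \<omega>)(x := X \<omega> x) = V \<omega>" by (simp add: Y_def X_def)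
      ultimately show "\<omega> \<in> N" by (auto simp: N_def A_def A0_def)
    qed
  qed
qed

theorem mainTheorem2:
  fixes M :: "'a measure" and V :: "'a \<Rightarrow> ('d::finite) site \<Rightarrow> real"
    and \<rho> :: "real \<Rightarrow> real" and I :: "real set"
  assumes "anderson_model M V \<rho>"
    and "exp_localization_interval M V I"
  shows "AE \<omega> in M. \<forall>E\<in>I. eigenvalue (V \<omega>) E \<longrightarrow> simple_eigenvalue (V \<omega>) E"
proof -
  have "AE \<omega> in M. \<forall>x. \<not> BadN (V \<omega>) x"
    unfolding AE_all_countable using AE_not_bad[OF assms(1)] by blast
  thus ?thesis by (rule eventually_mono) (auto intro: simple_of_noBad)
qed

end
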